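(* In the forking model with more than two alternatives, there exists a forking problem with a monotonic profile that admits no stable assignment.
   Context: A forking problem consists of agents $V=\{v_1,\dots,v_n\}$ and a finite set $M$ of alternatives. Each agent $v_i$ has a strict total order $\succ_i$ on $M\times\{1,\dots,n\}$, where $(S,j)$ means being in the community adopting alternative $S$, of size $j$ (including oneself); it is monotonic if $(S,j)\succ_i(S,k)$ for all $S\in M$ and $1\le k<j\le n$. An assignment is a map $f:V\to M$; $v_i$ prefers $f$ to $g$ if $(f(v_i),|f^{-1}(f(v_i))|)\succ_i(g(v_i),|g^{-1}(g(v_i))|)$. An assignment $f$ is stable if there is no assignment $f'\neq f$ such that every agent $v_i$ with $f'(v_i)\neq f(v_i)$ prefers $f'$ to $f$. *)

theory Defs
  imports Main "HOL-Library.FuncSet"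
begin

text \<open>Agents are 0,...,n-1; alternatives form a finite set M.
  P i is the strict preference of agent i on M x {1..n}:
  (x, y) in P i means x is strictly preferred to y by agent i.\<close>

definition forking_problem :: "'a set \<Rightarrow> nat \<Rightarrow> (nat \<Rightarrow> ('a \<times> nat) rel) \<Rightarrow> bool" where
  "forking_problem M n P \<longleftrightarrow> finite M \<and> n \<ge> 1 \<and>
     (\<forall>i<n. P i \<subseteq> (M \<times> {1..n}) \<times> (M \<times> {1..n}) \<and>
            strict_linear_order_on (M \<times> {1..n}) (P i))"

definition monotonic :: "'a set \<Rightarrow> nat \<Rightarrow> (nat \<Rightarrow> ('a \<times> nat) rel) \<Rightarrow> bool" where
  "monotonic M n P \<longleftrightarrow>
     (\<forall>i<n. \<forall>S\<in>M. \<forall>j k. 1 \<le> k \<and> k < j \<and> j \<le> n \<longrightarrow> ((S, j), (S, k)) \<in> P i)"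

definition assignment :: "'a set \<Rightarrow> nat \<Rightarrow> (nat \<Rightarrow> 'a) \<Rightarrow> bool" where
  "assignment M n f \<longleftrightarrow> f \<in> {0..<n} \<rightarrow>\<^sub>E M"

definition comm_size :: "nat \<Rightarrow> (nat \<Rightarrow> 'a) \<Rightarrow> nat \<Rightarrow> nat" where
  "comm_size n f i = card {j \<in> {0..<n}. f j = f i}"

definition prefers :: "nat \<Rightarrow> (nat \<Rightarrow> ('a \<times> nat) rel) \<Rightarrow> nat \<Rightarrow> (nat \<Rightarrow> 'a) \<Rightarrow> (nat \<Rightarrow> 'a) \<Rightarrow> bool" where
  "prefers n P i f g \<longleftrightarrow> ((f i, comm_size n f i), (g i, comm_size n g i)) \<in> P i"

definition stable :: "'a set \<Rightarrow> nat \<Rightarrow> (nat \<Rightarrow> ('a \<times> nat) rel) \<Rightarrow> (nat \<Rightarrow> 'a) \<Rightarrow> bool" where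
  "stable M n P f \<longleftrightarrow> assignment M n f \<and>
     \<not> (\<exists>f'. assignment M n f' \<and> f' \<noteq> f \<and>
            (\<forall>i<n. f' i \<noteq> f i \<longrightarrow> prefers n P i f' f))"

end

theory Submission
  imports Defs
begin

definition tab :: "nat \<Rightarrow> nat \<Rightarrow> nat \<Rightarrow> nat" where
  "tab i s k = [[[2,6,8],[1,3,4],[5,7,9]],[[2,3,4],[1,8,9],[5,6,7]],[[5,8,9],[1,6,7],[2,3,4::nat]]] ! i ! s ! (k-1)"

definition rk :: "'a \<Rightarrow> 'a \<Rightarrow> 'a \<Rightarrow> ('a \<Rightarrow> nat) \<Rightarrow> nat \<Rightarrow> nat \<Rightarrow> 'a \<times> nat \<Rightarrow> nat" where
  "rk a b c g B i p = (case p of (x,k) \<Rightarrow> if x = a then B + tab i 0 k else if x = b then B + tab i 1 k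
      else if x = c then B + tab i 2 k else g x * 3 + k)"

definition PP :: "'a set \<Rightarrow> 'a \<Rightarrow> 'a \<Rightarrow> 'a \<Rightarrow> ('a \<Rightarrow> nat) \<Rightarrow> nat \<Rightarrow> nat \<Rightarrow> ('a \<times> nat) rel" where
  "PP M a b c g B i = {(p,q). p \<in> M \<times> {1..3} \<and> q \<in> M \<times> {1..3} \<and> rk a b c g B i q < rk a b c g B i p}"

lemma cs3: "comm_size 3 f i = (if f 0 = f i then 1 else 0) + (if f 1 = f i then 1 else 0) + (if f 2 = f i then 1 else 0)"
proof -
  have e: "{0..<3::nat} = {0,1,2}" by auto
  have "{j \<in> {0..<3::nat}. f j = f i} = (if f 0 = f i then {0} else {}) \<union> (if f 1 = f i then {1} else {}) \<union> (if f 2 = f i then {2} else {})"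
    unfolding e by (auto split: if_splits intro: gr0I)
  then show ?thesis unfolding comm_size_def by (simp add: card_Un_disjoint)
qed

lemma upd_assign: "assignment M 3 f \<Longrightarrow> i < 3 \<Longrightarrow> v \<in> M \<Longrightarrow> assignment M 3 (f(i:=v))"
  unfolding assignment_def by (auto simp: PiE_def extensional_def)

lemma dev: "stable M n P f \<Longrightarrow> assignment M n f' \<Longrightarrow> f' \<noteq> f \<Longrightarrow> (\<forall>i<n. f' i \<noteq> f i \<longrightarrow> prefers n P i f' f) \<Longrightarrow> False"
  unfolding stable_def by blast

lemma neq1: "f j \<noteq> w \<Longrightarrow> g(j:=w) \<noteq> f"
  by (metis fun_upd_same)

lemma all3: "(\<forall>i<(3::nat). P i) = (P 0 \<and> P 1 \<and> P 2)"
  unfolding numeral_3_eq_3 numeral_2_eq_2 less_Suc_eq by auto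

lemma csb: "i < 3 \<Longrightarrow> 1 \<le> comm_size 3 f i \<and> comm_size 3 f i \<le> 3"
proof -
  assume "i < 3"
  then have "i = 0 \<or> i = 1 \<or> i = 2" by auto
  then show ?thesis unfolding cs3 by auto
qed

lemma nostable:
  assumes M: "a \<in> M" "b \<in> M" "c \<in> M" and dist: "a \<noteq> b" "a \<noteq> c" "b \<noteq> c"
    and st: "stable M 3 (PP M a b c g B) f"
    and gB: "\<forall>x\<in>M. g x * 3 + 3 < B"
  shows False
proof -
  have asg: "assignment M 3 f" using st unfolding stable_def by blast
  have fM: "f i \<in> M" if "i < 3" for i using asg that unfolding assignment_def by auto
  note dist' = dist dist[symmetric]
  have bad: False if "i < 3" "f i \<notin> {a,b,c}" for i
  proof (rule dev[OF st, of "f(i:=a)"])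
    show "assignment M 3 (f(i := a))" by (rule upd_assign[OF asg that(1) M(1)])
    show "f(i := a) \<noteq> f" using that by (metis fun_upd_same insertI1)
    have "g (f i) * 3 + 3 < B" using gB fM[OF that(1)] by blast
    moreover have "comm_size 3 f i \<le> 3" "comm_size 3 f i \<ge> 1" "comm_size 3 (f(i:=a)) i \<ge> 1" "comm_size 3 (f(i:=a)) i \<le> 3"
      using csb[OF that(1)] by auto
    ultimately show "\<forall>j<3. (f(i := a)) j \<noteq> f j \<longrightarrow> prefers 3 (PP M a b c g B) j (f(i := a)) f"
      using that fM[OF that(1)] M unfolding prefers_def PP_def rk_def by auto
  qed
  have h: "f 0 \<in> {a,b,c}" "f 1 \<in> {a,b,c}" "f 2 \<in> {a,b,c}" using bad[of 0] bad[of 1] bad[of 2] by auto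
  note dist = dist'
  have c1: "f 0 = a \<Longrightarrow> f 1 = a \<Longrightarrow> f 2 = a \<Longrightarrow> False"
    by (rule dev[OF st, of "f(1:=c)"]) ((intro upd_assign asg; simp add: M), (rule neq1, simp add: dist), auto simp: M all3 cs3 prefers_def PP_def rk_def tab_def dist)
  have c2: "f 0 = a \<Longrightarrow> f 1 = a \<Longrightarrow> f 2 = b \<Longrightarrow> False"
    by (rule dev[OF st, of "f(2:=a)"]) ((intro upd_assign asg; simp add: M), (rule neq1, simp add: dist), auto simp: M all3 cs3 prefers_def PP_def rk_def tab_def dist)
  have c3: "f 0 = a \<Longrightarrow> f 1 = a \<Longrightarrow> f 2 = c \<Longrightarrow> False"
    by (rule dev[OF st, of "f(2:=a)"]) ((intro upd_assign asg; simp add: M), (rule neq1, simp add: dist), auto simp: M all3 cs3 prefers_def PP_def rk_def tab_def dist)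
  have c4: "f 0 = a \<Longrightarrow> f 1 = b \<Longrightarrow> f 2 = a \<Longrightarrow> False"
    by (rule dev[OF st, of "f(1:=a)"]) ((intro upd_assign asg; simp add: M), (rule neq1, simp add: dist), auto simp: M all3 cs3 prefers_def PP_def rk_def tab_def dist)
  have c5: "f 0 = a \<Longrightarrow> f 1 = b \<Longrightarrow> f 2 = b \<Longrightarrow> False"
    by (rule dev[OF st, of "f(2:=a)"]) ((intro upd_assign asg; simp add: M), (rule neq1, simp add: dist), auto simp: M all3 cs3 prefers_def PP_def rk_def tab_def dist)
  have c6: "f 0 = a \<Longrightarrow> f 1 = b \<Longrightarrow> f 2 = c \<Longrightarrow> False"
    by (rule dev[OF st, of "f(1:=a)"]) ((intro upd_assign asg; simp add: M), (rule neq1, simp add: dist), auto simp: M all3 cs3 prefers_def PP_def rk_def tab_def dist)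
  have c7: "f 0 = a \<Longrightarrow> f 1 = c \<Longrightarrow> f 2 = a \<Longrightarrow> False"
    by (rule dev[OF st, of "f(0:=c)"]) ((intro upd_assign asg; simp add: M), (rule neq1, simp add: dist), auto simp: M all3 cs3 prefers_def PP_def rk_def tab_def dist)
  have c8: "f 0 = a \<Longrightarrow> f 1 = c \<Longrightarrow> f 2 = b \<Longrightarrow> False"
    by (rule dev[OF st, of "f(1:=b)"]) ((intro upd_assign asg; simp add: M), (rule neq1, simp add: dist), auto simp: M all3 cs3 prefers_def PP_def rk_def tab_def dist)
  have c9: "f 0 = a \<Longrightarrow> f 1 = c \<Longrightarrow> f 2 = c \<Longrightarrow> False"
    by (rule dev[OF st, of "f(2:=a)"]) ((intro upd_assign asg; simp add: M), (rule neq1, simp add: dist), auto simp: M all3 cs3 prefers_def PP_def rk_def tab_def dist)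
  have c10: "f 0 = b \<Longrightarrow> f 1 = a \<Longrightarrow> f 2 = a \<Longrightarrow> False"
    by (rule dev[OF st, of "f(0:=a)"]) ((intro upd_assign asg; simp add: M), (rule neq1, simp add: dist), auto simp: M all3 cs3 prefers_def PP_def rk_def tab_def dist)
  have c11: "f 0 = b \<Longrightarrow> f 1 = a \<Longrightarrow> f 2 = b \<Longrightarrow> False"
    by (rule dev[OF st, of "f(0:=a)"]) ((intro upd_assign asg; simp add: M), (rule neq1, simp add: dist), auto simp: M all3 cs3 prefers_def PP_def rk_def tab_def dist)
  have c12: "f 0 = b \<Longrightarrow> f 1 = a \<Longrightarrow> f 2 = c \<Longrightarrow> False"
    by (rule dev[OF st, of "f(0:=a)"]) ((intro upd_assign asg; simp add: M), (rule neq1, simp add: dist), auto simp: M all3 cs3 prefers_def PP_def rk_def tab_def dist)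
  have c13: "f 0 = b \<Longrightarrow> f 1 = b \<Longrightarrow> f 2 = a \<Longrightarrow> False"
    by (rule dev[OF st, of "f(0:=a)"]) ((intro upd_assign asg; simp add: M), (rule neq1, simp add: dist), auto simp: M all3 cs3 prefers_def PP_def rk_def tab_def dist)
  have c14: "f 0 = b \<Longrightarrow> f 1 = b \<Longrightarrow> f 2 = b \<Longrightarrow> False"
    by (rule dev[OF st, of "f(0:=c)"]) ((intro upd_assign asg; simp add: M), (rule neq1, simp add: dist), auto simp: M all3 cs3 prefers_def PP_def rk_def tab_def dist)
  have c15: "f 0 = b \<Longrightarrow> f 1 = b \<Longrightarrow> f 2 = c \<Longrightarrow> False"
    by (rule dev[OF st, of "f(2:=a)"]) ((intro upd_assign asg; simp add: M), (rule neq1, simp add: dist), auto simp: M all3 cs3 prefers_def PP_def rk_def tab_def dist)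
  have c16: "f 0 = b \<Longrightarrow> f 1 = c \<Longrightarrow> f 2 = a \<Longrightarrow> False"
    by (rule dev[OF st, of "f(0:=a)"]) ((intro upd_assign asg; simp add: M), (rule neq1, simp add: dist), auto simp: M all3 cs3 prefers_def PP_def rk_def tab_def dist)
  have c17: "f 0 = b \<Longrightarrow> f 1 = c \<Longrightarrow> f 2 = b \<Longrightarrow> False"
    by (rule dev[OF st, of "f(1:=b)"]) ((intro upd_assign asg; simp add: M), (rule neq1, simp add: dist), auto simp: M all3 cs3 prefers_def PP_def rk_def tab_def dist)
  have c18: "f 0 = b \<Longrightarrow> f 1 = c \<Longrightarrow> f 2 = c \<Longrightarrow> False"
    by (rule dev[OF st, of "f(0:=a)"]) ((intro upd_assign asg; simp add: M), (rule neq1, simp add: dist), auto simp: M all3 cs3 prefers_def PP_def rk_def tab_def dist)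
  have c19: "f 0 = c \<Longrightarrow> f 1 = a \<Longrightarrow> f 2 = a \<Longrightarrow> False"
    by (rule dev[OF st, of "f(0:=a)"]) ((intro upd_assign asg; simp add: M), (rule neq1, simp add: dist), auto simp: M all3 cs3 prefers_def PP_def rk_def tab_def dist)
  have c20: "f 0 = c \<Longrightarrow> f 1 = a \<Longrightarrow> f 2 = b \<Longrightarrow> False"
    by (rule dev[OF st, of "f(0:=a)"]) ((intro upd_assign asg; simp add: M), (rule neq1, simp add: dist), auto simp: M all3 cs3 prefers_def PP_def rk_def tab_def dist)
  have c21: "f 0 = c \<Longrightarrow> f 1 = a \<Longrightarrow> f 2 = c \<Longrightarrow> False"
    by (rule dev[OF st, of "f(2:=a)"]) ((intro upd_assign asg; simp add: M), (rule neq1, simp add: dist), auto simp: M all3 cs3 prefers_def PP_def rk_def tab_def dist)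
  have c22: "f 0 = c \<Longrightarrow> f 1 = b \<Longrightarrow> f 2 = a \<Longrightarrow> False"
    by (rule dev[OF st, of "f(0:=a)"]) ((intro upd_assign asg; simp add: M), (rule neq1, simp add: dist), auto simp: M all3 cs3 prefers_def PP_def rk_def tab_def dist)
  have c23: "f 0 = c \<Longrightarrow> f 1 = b \<Longrightarrow> f 2 = b \<Longrightarrow> False"
    by (rule dev[OF st, of "f(0:=a, 2:=a)"]) ((intro upd_assign asg; simp add: M), (rule neq1, simp add: dist), auto simp: M all3 cs3 prefers_def PP_def rk_def tab_def dist)
  have c24: "f 0 = c \<Longrightarrow> f 1 = b \<Longrightarrow> f 2 = c \<Longrightarrow> False"
    by (rule dev[OF st, of "f(1:=a)"]) ((intro upd_assign asg; simp add: M), (rule neq1, simp add: dist), auto simp: M all3 cs3 prefers_def PP_def rk_def tab_def dist)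
  have c25: "f 0 = c \<Longrightarrow> f 1 = c \<Longrightarrow> f 2 = a \<Longrightarrow> False"
    by (rule dev[OF st, of "f(1:=b, 2:=b)"]) ((intro upd_assign asg; simp add: M), (rule neq1, simp add: dist), auto simp: M all3 cs3 prefers_def PP_def rk_def tab_def dist)
  have c26: "f 0 = c \<Longrightarrow> f 1 = c \<Longrightarrow> f 2 = b \<Longrightarrow> False"
    by (rule dev[OF st, of "f(1:=b)"]) ((intro upd_assign asg; simp add: M), (rule neq1, simp add: dist), auto simp: M all3 cs3 prefers_def PP_def rk_def tab_def dist)
  have c27: "f 0 = c \<Longrightarrow> f 1 = c \<Longrightarrow> f 2 = c \<Longrightarrow> False"
    by (rule dev[OF st, of "f(2:=a)"]) ((intro upd_assign asg; simp add: M), (rule neq1, simp add: dist), auto simp: M all3 cs3 prefers_def PP_def rk_def tab_def dist)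
  show False using h c1 c2 c3 c4 c5 c6 c7 c8 c9 c10 c11 c12 c13 c14 c15 c16 c17 c18 c19 c20 c21 c22 c23 c24 c25 c26 c27
    by blast
qed

lemma rk_inj:
  assumes dist: "a \<noteq> b" "a \<noteq> c" "b \<noteq> c" and inj: "inj_on g M"
    and gB: "\<forall>x\<in>M. g x * 3 + 3 < B" and i: "i < 3"
    and p: "p \<in> M \<times> {1..3}" and q: "q \<in> M \<times> {1..3}" and eq: "rk a b c g B i p = rk a b c g B i q"
  shows "p = q"
proof -
  obtain x k where pk: "p = (x,k)" "x \<in> M" "k \<in> {1..3}" using p by auto
  obtain y l where ql: "q = (y,l)" "y \<in> M" "l \<in> {1..3}" using q by auto
  have k: "k = 1 \<or> k = 2 \<or> k = 3" and l: "l = 1 \<or> l = 2 \<or> l = 3" using pk ql by auto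
  have ii: "i = 0 \<or> i = 1 \<or> i = 2" using i by auto
  have gx: "g x * 3 + 3 < B" "g y * 3 + 3 < B" using gB pk ql by auto
  show ?thesis
  proof (cases "x \<in> {a,b,c} \<or> y \<in> {a,b,c}")
    case True
    then show ?thesis using eq k l ii gx dist unfolding pk ql rk_def tab_def
      by (auto split: if_splits)
  next
    case False
    then have "g x * 3 + k = g y * 3 + l" using eq unfolding pk ql rk_def by auto
    then have "k = l \<and> g x = g y" using k l by presburger
    then show ?thesis using inj pk ql unfolding inj_on_def by auto
  qed
qed

theorem proposition3:
  fixes M :: "'a set"
  assumes "finite M" and "card M > 2"
  shows "\<exists>n P. forking_problem M n P \<and> monotonic M n P \<and> \<not> (\<exists>f. stable M n P f)"
proof -
  obtain a where a: "a \<in> M" using assms by fastforce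
  have "card (M - {a}) > 1" using assms a by auto
  then have "M - {a} \<noteq> {}" by (metis card.empty not_less_zero)
  then obtain b where b: "b \<in> M" "b \<noteq> a" by blast
  have "card (M - {a, b}) > 0" using assms a b by (auto simp: card_Diff_subset)
  then have "M - {a, b} \<noteq> {}" by (metis card.empty less_irrefl)
  then obtain c where c: "c \<in> M" "c \<noteq> a" "c \<noteq> b" by blast
  have dist: "a \<noteq> b" "a \<noteq> c" "b \<noteq> c" using b c by auto
  obtain g N where gN: "g ` M = {i::nat. i < N}" "inj_on g M" using finite_imp_inj_to_nat_seg[OF assms(1)] by blast
  define B where "B = 3 * N + 10"
  have gB: "\<forall>x\<in>M. g x * 3 + 3 < B"
  proof
    fix x assume "x \<in> M"
    then have "g x < N" using gN(1) by blast
    then show "g x * 3 + 3 < B" unfolding B_def by linarith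
  qed
  define P where "P = PP M a b c g B"
  have fp: "forking_problem M 3 P"
    unfolding forking_problem_def
  proof (intro conjI allI impI)
    fix i :: nat assume i: "i < 3"
    show "P i \<subseteq> (M \<times> {1..3}) \<times> (M \<times> {1..3})" unfolding P_def PP_def by auto
    show "strict_linear_order_on (M \<times> {1..3}) (P i)"
      unfolding strict_linear_order_on_def
    proof (intro conjI)
      show "trans (P i)" unfolding P_def PP_def trans_def by auto
      show "irrefl (P i)" unfolding P_def PP_def irrefl_def by auto
      show "total_on (M \<times> {1..3}) (P i)" unfolding total_on_def
      proof (intro ballI impI)
        fix p q :: "'a \<times> nat" assume pq: "p \<in> M \<times> {1..3}" "q \<in> M \<times> {1..3}" "p \<noteq> q"
        then have "rk a b c g B i p \<noteq> rk a b c g B i q"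
          using rk_inj[OF dist gN(2) gB i] by blast
        then show "(p, q) \<in> P i \<or> (q, p) \<in> P i" using pq unfolding P_def PP_def by auto
      qed
    qed
  qed (use assms in auto)
  have mono: "monotonic M 3 P"
    unfolding monotonic_def
  proof (intro allI impI ballI)
    fix i S j k assume i: "i < (3::nat)" and S: "S \<in> M" and jk: "1 \<le> k \<and> k < j \<and> j \<le> (3::nat)"
    have ii: "i = 0 \<or> i = 1 \<or> i = 2" using i by auto
    have jk': "(k = 1 \<and> j = 2) \<or> (k = 1 \<and> j = 3) \<or> (k = 2 \<and> j = 3)" using jk by auto
    show "((S, j), S, k) \<in> P i"
      using ii jk' jk S unfolding P_def PP_def rk_def tab_def by auto
  qed
  have "\<not> (\<exists>f. stable M 3 P f)"
    using nostable[OF a b(1) c(1) dist _ gB] unfolding P_def by blast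
  then show ?thesis using fp mono by blast
qed

end
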